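(* Let $\Phi=\forall u_1\ldots\forall u_n\exists e_1(D_1)\ldots\exists e_m(D_m).\varphi$ be a DQBF with prefix $\mathcal{Q}$, let $A$ be a set of arbiter variables, let $\psi$ be a CNF with $\mathit{var}(\psi)\subseteq U\cup E\cup A$, and let $C=\neg p\vee\ell$ be a forcing clause in $\psi$. Then $\mathcal{Q}\exists A(\emptyset).\psi\wedge C$ is true if and only if $\mathcal{Q}\exists A(\emptyset).\psi$ is true.
   Context: For a set $V$ of variables, $[V]$ is the set of assignments $V\to\{\textsc{true},\textsc{false}\}$; assignments are identified with terms of the literals they make true, $\neg\sigma$ is the clause of the negations of these literals, and $\sigma|_W$ denotes restriction to (the part of the domain lying in) $W$. A DQBF is $\forall u_1\ldots\forall u_n\exists e_1(D_1)\ldots\exists e_m(D_m).\varphi$ with pairwise distinct variables, $U=\{u_i\}$, $E=\{e_j\}$, dependency sets $D(e_j)=D_j\subseteq U$, and $\varphi$ a CNF over $U\cup E$; a model is a family $F=(F_e)_{e}$ with $F_e:[D(e)]\to\{\textsc{true},\textsc{false}\}$ such that for every $\sigma\in[U]$, $\sigma\cup F(\sigma)$ satisfies the matrix, where $F(\sigma)$ assigns each existential $e$ the value $F_e(\sigma|_{D(e)})$; the DQBF is true iff it has a model. Arbiter variables are fresh variables $e^\sigma$ for $e\in E$, $\sigma\in[D(e)]$. For a set $A$ of them and a CNF $\psi$, $\mathcal{Q}\exists A(\emptyset).\psi$ is the DQBF whose prefix is that of $\Phi$ extended by every variable of $A$ as an existential variable with empty dependency set, and whose matrix is $\psi$. Forcing: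 let $\ell$ be a literal on a variable in $E$, $\psi$ a formula with $\mathit{var}(\psi)\subseteq U\cup E\cup A$, and $\sigma$ a partial assignment to $U\cup A$; $\ell$ is forced by $\sigma$ in $\psi$ if $\psi\wedge\sigma\wedge\neg\ell$ is unsatisfiable, and in that case $\neg(\sigma|_{D(\mathit{var}(\ell))\cup A})\vee\ell$ is called a forcing clause in $\psi$. *)

theory Defs
  imports Main
begin

(* Variables: original DQBF variables 'v, and arbiter variables e^sigma,
   represented as Arb e sigma with sigma an assignment (partial map with
   domain D(e)). The datatype makes arbiter variables fresh. *)
datatype 'v var = V 'v | Arb 'v "'v \<rightharpoonup> bool"

(* A literal is a variable with a polarity; (x, True) is x, (x, False) is \<not>x. *)
type_synonym 'a lit = "'a \<times> bool"
type_synonym 'a clause = "'a lit set"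
type_synonym 'a cnf = "'a clause set"

definition vars :: "'a cnf \<Rightarrow> 'a set" where
  "vars M = {x. \<exists>C\<in>M. \<exists>b. (x, b) \<in> C}"

definition sat_cnf :: "('a \<rightharpoonup> bool) \<Rightarrow> 'a cnf \<Rightarrow> bool" where
  "sat_cnf \<tau> M \<longleftrightarrow> (\<forall>C\<in>M. \<exists>(x, b)\<in>C. \<tau> x = Some b)"

definition dqbf_true :: "'a set \<Rightarrow> 'a set \<Rightarrow> ('a \<Rightarrow> 'a set) \<Rightarrow> 'a cnf \<Rightarrow> bool" where
  "dqbf_true U E D M \<longleftrightarrow>
     (\<exists>F :: 'a \<Rightarrow> ('a \<rightharpoonup> bool) \<Rightarrow> bool.
        \<forall>\<sigma>. dom \<sigma> = U \<longrightarrow>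
          sat_cnf (\<sigma> ++ (\<lambda>x. if x \<in> E then Some (F x (\<sigma> |` D x)) else None)) M)"

definition dqbf_wf :: "'a set \<Rightarrow> 'a set \<Rightarrow> ('a \<Rightarrow> 'a set) \<Rightarrow> 'a cnf \<Rightarrow> bool" where
  "dqbf_wf U E D \<phi> \<longleftrightarrow> finite U \<and> finite E \<and> U \<inter> E = {} \<and>
     (\<forall>e\<in>E. D e \<subseteq> U) \<and> finite \<phi> \<and> (\<forall>C\<in>\<phi>. finite C) \<and> vars \<phi> \<subseteq> U \<union> E"

definition arbiters :: "'v set \<Rightarrow> ('v \<Rightarrow> 'v set) \<Rightarrow> 'v var set" where
  "arbiters E D = {Arb e \<sigma> | e \<sigma>. e \<in> E \<and> dom \<sigma> = D e}"

fun ext_dep :: "('v \<Rightarrow> 'v set) \<Rightarrow> 'v var \<Rightarrow> 'v var set" where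
  "ext_dep D (V x) = V ` D x"
| "ext_dep D (Arb e \<sigma>) = {}"

definition ext_true :: "'v set \<Rightarrow> 'v set \<Rightarrow> ('v \<Rightarrow> 'v set) \<Rightarrow> 'v var set \<Rightarrow> 'v var cnf \<Rightarrow> bool" where
  "ext_true U E D A \<psi> = dqbf_true (V ` U) (V ` E \<union> A) (ext_dep D) \<psi>"

definition forced :: "'a cnf \<Rightarrow> ('a \<rightharpoonup> bool) \<Rightarrow> 'a lit \<Rightarrow> bool" where
  "forced \<psi> \<sigma> l \<longleftrightarrow>
     \<not> (\<exists>\<tau> :: 'a \<Rightarrow> bool. sat_cnf (Some \<circ> \<tau>) \<psi> \<and>
            (\<forall>x\<in>dom \<sigma>. \<sigma> x = Some (\<tau> x)) \<and> \<tau> (fst l) \<noteq> snd l)"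

definition neg_term :: "('a \<rightharpoonup> bool) \<Rightarrow> 'a clause" where
  "neg_term \<sigma> = {(x, \<not> b) | x b. \<sigma> x = Some b}"

definition forcing_clause ::
  "'v set \<Rightarrow> 'v set \<Rightarrow> ('v \<Rightarrow> 'v set) \<Rightarrow> 'v var set \<Rightarrow> 'v var cnf \<Rightarrow> 'v var clause \<Rightarrow> bool" where
  "forcing_clause U E D A \<psi> C \<longleftrightarrow>
     (\<exists>e b \<sigma>. e \<in> E \<and> dom \<sigma> \<subseteq> V ` U \<union> A \<and> forced \<psi> \<sigma> (V e, b) \<and>
        C = insert (V e, b) (neg_term (\<sigma> |` (V ` D e \<union> A))))"

end

theory Submission
  imports Defs
begin

theorem corollary2:
  fixes U E :: "'v set" and D :: "'v \<Rightarrow> 'v set" and \<phi> :: "'v cnf"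
    and A :: "'v var set" and \<psi> :: "'v var cnf" and C :: "'v var clause"
  assumes "dqbf_wf U E D \<phi>"
    and "A \<subseteq> arbiters E D"
    and "finite \<psi>" and "\<forall>c\<in>\<psi>. finite c"
    and "vars \<psi> \<subseteq> V ` U \<union> V ` E \<union> A"
    and "forcing_clause U E D A \<psi> C"
  shows "ext_true U E D A (insert C \<psi>) \<longleftrightarrow> ext_true U E D A \<psi>"
proof
  assume "ext_true U E D A (insert C \<psi>)"
  then show "ext_true U E D A \<psi>"
    unfolding ext_true_def dqbf_true_def sat_cnf_def by blast
next
  assume "ext_true U E D A \<psi>"
  then obtain F where hF: "\<And>\<sigma>1. dom \<sigma>1 = V ` U \<Longrightarrow>
      sat_cnf (\<sigma>1 ++ (\<lambda>x. if x \<in> V ` E \<union> A then Some (F x (\<sigma>1 |` ext_dep D x)) else None)) \<psi>"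
    unfolding ext_true_def dqbf_true_def by blast
  define E' where "E' = V ` E \<union> A"
  define asg where "asg = (\<lambda>\<sigma>1. \<sigma>1 ++ (\<lambda>x. if x \<in> E' then Some (F x (\<sigma>1 |` ext_dep D x)) else None))"
  have hF': "\<And>\<sigma>1. dom \<sigma>1 = V ` U \<Longrightarrow> sat_cnf (asg \<sigma>1) \<psi>"
    using hF unfolding asg_def E'_def by blast
  obtain e b \<sigma> where e: "e \<in> E" and ds: "dom \<sigma> \<subseteq> V ` U \<union> A" and fo: "forced \<psi> \<sigma> (V e, b)"
    and Ceq: "C = insert (V e, b) (neg_term (\<sigma> |` (V ` D e \<union> A)))"
    using assms(6) unfolding forcing_clause_def by blast
  have disj: "U \<inter> E = {}" and DeU: "D e \<subseteq> U" using assms(1) e unfolding dqbf_wf_def by auto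
  have Aarb: "\<And>x. x \<in> A \<Longrightarrow> ext_dep D x = {}"
    using assms(2) unfolding arbiters_def by auto
  have notE': "\<And>x. x \<in> V ` U \<Longrightarrow> x \<notin> E'"
  proof -
    fix x assume "x \<in> V ` U"
    then obtain u where u: "x = V u" "u \<in> U" by auto
    have "V u \<notin> A" using assms(2) unfolding arbiters_def by auto
    then show "x \<notin> E'" using u disj unfolding E'_def by auto
  qed
  have asgU: "\<And>\<sigma>1 x. x \<in> V ` U \<Longrightarrow> asg \<sigma>1 x = \<sigma>1 x"
    using notE' unfolding asg_def by (simp add: map_add_def)
  have asgE: "\<And>\<sigma>1 x. x \<in> E' \<Longrightarrow> asg \<sigma>1 x = Some (F x (\<sigma>1 |` ext_dep D x))"
    unfolding asg_def by (simp add: map_add_def)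
  have "\<forall>\<sigma>1. dom \<sigma>1 = V ` U \<longrightarrow> sat_cnf (asg \<sigma>1) (insert C \<psi>)"
  proof (intro allI impI)
    fix \<sigma>1 :: "'v var \<Rightarrow> bool option" assume d1: "dom \<sigma>1 = V ` U"
    have s1: "sat_cnf (asg \<sigma>1) \<psi>" using hF' d1 .
    have "\<exists>(x, c)\<in>C. asg \<sigma>1 x = Some c"
    proof (cases "\<exists>x\<in>dom \<sigma> \<inter> (V ` D e \<union> A). asg \<sigma>1 x \<noteq> \<sigma> x")
      case True
      then obtain x where x: "x \<in> dom \<sigma>" "x \<in> V ` D e \<union> A" "asg \<sigma>1 x \<noteq> \<sigma> x" by blast
      obtain c where c: "\<sigma> x = Some c" using x(1) by auto
      have "asg \<sigma>1 x \<noteq> None"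
      proof (cases "x \<in> A")
        case True then show ?thesis using asgE unfolding E'_def by auto
      next
        case False then have "x \<in> V ` U" using x(2) DeU by auto
        then show ?thesis using asgU d1 by auto
      qed
      then have "asg \<sigma>1 x = Some (\<not> c)" using x(3) c by (cases "asg \<sigma>1 x") auto
      moreover have "(x, \<not> c) \<in> C" using c x unfolding Ceq neg_term_def
        by (auto simp: restrict_map_def)
      ultimately show ?thesis by blast
    next
      case False
      then have agr: "\<And>x. x \<in> dom \<sigma> \<Longrightarrow> x \<in> V ` D e \<union> A \<Longrightarrow> asg \<sigma>1 x = \<sigma> x" by blast
      define \<sigma>0 where "\<sigma>0 = (\<lambda>x. if x \<in> dom \<sigma> \<inter> V ` U then \<sigma> x else \<sigma>1 x)"
      have d0: "dom \<sigma>0 = V ` U"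
      proof (rule set_eqI)
        fix x
        have h: "\<sigma>1 x \<noteq> None \<longleftrightarrow> x \<in> V ` U" using d1 by (metis domIff)
        have "\<sigma>0 x \<noteq> None \<longleftrightarrow> x \<in> V ` U"
        proof (cases "x \<in> dom \<sigma> \<inter> V ` U")
          case True
          then have "\<sigma>0 x = \<sigma> x" unfolding \<sigma>0_def by simp
          then show ?thesis using True by (simp add: domIff)
        next
          case False
          have "\<sigma>0 x = \<sigma>1 x" unfolding \<sigma>0_def by (rule if_not_P[OF False])
          then show ?thesis using h by simp
        qed
        then show "x \<in> dom \<sigma>0 \<longleftrightarrow> x \<in> V ` U" by blast
      qed
      have s0: "sat_cnf (asg \<sigma>0) \<psi>" using hF' d0 .
      define \<tau>0 where "\<tau>0 = (\<lambda>x. case asg \<sigma>0 x of Some v \<Rightarrow> v | None \<Rightarrow> True)"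
      have st: "sat_cnf (Some \<circ> \<tau>0) \<psi>" unfolding sat_cnf_def
      proof
        fix c assume "c \<in> \<psi>"
        then obtain x v where xv: "(x, v) \<in> c" "asg \<sigma>0 x = Some v"
          using s0 unfolding sat_cnf_def by blast
        then have "(Some \<circ> \<tau>0) x = Some v" unfolding \<tau>0_def by simp
        then show "\<exists>(x, v)\<in>c. (Some \<circ> \<tau>0) x = Some v" using xv(1) by blast
      qed
      have ag0: "\<forall>x\<in>dom \<sigma>. \<sigma> x = Some (\<tau>0 x)"
      proof
        fix x assume xd: "x \<in> dom \<sigma>"
        show "\<sigma> x = Some (\<tau>0 x)"
        proof (cases "x \<in> V ` U")
          case True
          then have "asg \<sigma>0 x = \<sigma> x" using asgU xd unfolding \<sigma>0_def by auto
          then show ?thesis using xd unfolding \<tau>0_def by auto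
        next
          case False
          then have xA: "x \<in> A" using ds xd by auto
          then have "x \<in> E'" unfolding E'_def by auto
          then have "asg \<sigma>0 x = asg \<sigma>1 x" using asgE Aarb xA by simp
          also have "\<dots> = \<sigma> x" using agr xd xA by auto
          finally show ?thesis using xd unfolding \<tau>0_def by auto
        qed
      qed
      have "\<tau>0 (V e) = b" using fo st ag0 unfolding forced_def by auto
      moreover have eE: "V e \<in> E'" using e unfolding E'_def by auto
      have "\<sigma>0 |` (V ` D e) = \<sigma>1 |` (V ` D e)"
      proof
        fix x show "(\<sigma>0 |` (V ` D e)) x = (\<sigma>1 |` (V ` D e)) x"
        proof (cases "x \<in> V ` D e \<and> x \<in> dom \<sigma>")
          case True
          then have "x \<in> V ` U" using DeU by auto
          then show ?thesis using True agr[of x] asgU[of x \<sigma>1] unfolding \<sigma>0_def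
            by (auto simp: restrict_map_def)
        next
          case False then show ?thesis unfolding \<sigma>0_def by (auto simp: restrict_map_def)
        qed
      qed
      then have "asg \<sigma>0 (V e) = asg \<sigma>1 (V e)" using asgE[OF eE] by simp
      ultimately have "asg \<sigma>1 (V e) = Some b" using asgE[OF eE] unfolding \<tau>0_def by auto
      then show ?thesis unfolding Ceq by auto
    qed
    then show "sat_cnf (asg \<sigma>1) (insert C \<psi>)" using s1 unfolding sat_cnf_def by blast
  qed
  then show "ext_true U E D A (insert C \<psi>)"
    unfolding ext_true_def dqbf_true_def asg_def E'_def by blast
qed

end
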